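(* Let $X$ and $X'$ be independent identically distributed real random variables with distribution function $F$, $\mathbb E X=0$ and $\mathbb E X^2<\infty$. Put $\sigma^2(z)=\mathbb E X^2\mathbf 1(|X|\ge z)$ and $\sigma_s^2(z)=\mathbb E(X-X')^2\mathbf 1(|X-X'|\ge z)$, $z\ge0$. Then $$\sigma_s^2(z)\le2\sigma^2(\alpha z)+2\sigma^2((1-\alpha)z),\qquad z\ge0,\ \alpha\in[0,1].$$ In particular $\sigma_s^2(z)\le4\sigma^2(z/2)$ for all $z\ge0$, and the constant $4$ is best possible: for every $z>0$, $\sup\sigma_s^2(z)/\sigma^2(z/2)=4$, where the supremum is over all distributions of $X$ with $\mathbb E X=0$ (and finite second moment), and it is delivered by the two-point distributions $\mathbb P(X=qz)=p$, $\mathbb P(X=-pz)=q=1-p$ as $p\to\frac12+$. *)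

theory Defs
  imports "HOL-Probability.Probability"
begin

definition sigma2 :: "real measure \<Rightarrow> real \<Rightarrow> real" where
  "sigma2 N z = (\<integral>x. x\<^sup>2 * indicator {x. \<bar>x\<bar> \<ge> z} x \<partial>N)"

text \<open>Symmetrized version: sigma_s^2(z) = E (X - X')^2 1(|X - X'| >= z) with X, X'
  independent with common law N, i.e. (X, X') has law N \<Otimes> N.\<close>
definition sigma_s2 :: "real measure \<Rightarrow> real \<Rightarrow> real" where
  "sigma_s2 N z = (\<integral>w. (fst w - snd w)\<^sup>2 * indicator {w. \<bar>fst w - snd w\<bar> \<ge> z} w \<partial>(N \<Otimes>\<^sub>M N))"

definition two_point :: "real \<Rightarrow> real \<Rightarrow> real measure" where
  "two_point z p = distr (measure_pmf (bernoulli_pmf p)) borel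
      (\<lambda>b. if b then (1 - p) * z else - p * z)"

end

theory Submission
  imports Defs
begin


lemma (in prob_space) indep_var_sym:
  assumes "indep_var S X T Y" shows "indep_var T Y S X"
proof -
  note h = assms[unfolded indep_var_eq indep_sets2_eq]
  have "\<forall>a\<in>sigma_sets (space M) {Y -` A \<inter> space M |A. A \<in> sets T}.
           \<forall>b\<in>sigma_sets (space M) {X -` A \<inter> space M |A. A \<in> sets S}.
              prob (a \<inter> b) = prob a * prob b"
  proof (intro ballI)
    fix a b
    assume "a \<in> sigma_sets (space M) {Y -` A \<inter> space M |A. A \<in> sets T}"
      "b \<in> sigma_sets (space M) {X -` A \<inter> space M |A. A \<in> sets S}"
    then have "prob (b \<inter> a) = prob b * prob a" using h by blast
    then show "prob (a \<inter> b) = prob a * prob b" by (simp add: Int_commute mult.commute)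
  qed
  then show ?thesis using h unfolding indep_var_eq indep_sets2_eq by blast
qed

lemma (in prob_space) stepB:
  fixes Y Z :: "'a \<Rightarrow> real"
  assumes ind: "indep_var borel Y borel Z"
  and [measurable]: "Y \<in> borel_measurable M" "Z \<in> borel_measurable M"
  and iY2: "integrable M (\<lambda>\<omega>. (Y \<omega>)\<^sup>2)" and iY: "integrable M Y"
  and iZ: "integrable M Z" and iZ2: "integrable M (\<lambda>\<omega>. (Z \<omega>)\<^sup>2)"
  and EZ: "expectation Z = 0" and E2: "expectation (\<lambda>\<omega>. (Z \<omega>)\<^sup>2) = expectation (\<lambda>\<omega>. (Y \<omega>)\<^sup>2)"
  and a: "a \<ge> 0"
  shows "expectation (\<lambda>\<omega>. (Y \<omega> - Z \<omega>)\<^sup>2 * indicator {\<omega>. \<bar>Y \<omega>\<bar> \<ge> a} \<omega>)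
     \<le> 2 * expectation (\<lambda>\<omega>. (Y \<omega>)\<^sup>2 * indicator {\<omega>. \<bar>Y \<omega>\<bar> \<ge> a} \<omega>)"
proof -
  define I where "I = (\<lambda>\<omega>. if \<bar>Y \<omega>\<bar> \<ge> a then 1 else (0::real))"
  have [measurable]: "I \<in> borel_measurable M" unfolding I_def by measurable
  have ind_eq: "\<And>\<omega>. indicator {\<omega>. \<bar>Y \<omega>\<bar> \<ge> a} \<omega> = I \<omega>" by (simp add: I_def indicator_def)
  have iI: "integrable M I"
    by (rule integrable_const_bound[where B=1]) (auto simp: I_def)
  have iYI: "integrable M (\<lambda>\<omega>. Y \<omega> * I \<omega>)"
    by (rule Bochner_Integration.integrable_bound[OF iY]) (auto simp: I_def)
  have iY2I: "integrable M (\<lambda>\<omega>. (Y \<omega>)\<^sup>2 * I \<omega>)"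
    by (rule Bochner_Integration.integrable_bound[OF iY2]) (auto simp: I_def)
  have "indep_var borel ((\<lambda>y. y * (if \<bar>y\<bar> \<ge> a then 1 else (0::real))) \<circ> Y) borel ((\<lambda>z. z) \<circ> Z)"
    by (rule indep_var_compose[OF ind]) auto
  then have ind1: "indep_var borel (\<lambda>\<omega>. Y \<omega> * I \<omega>) borel Z"
    by (simp add: comp_def I_def)
  have "indep_var borel ((\<lambda>y. (if \<bar>y\<bar> \<ge> a then 1 else (0::real))) \<circ> Y) borel ((\<lambda>z. z\<^sup>2) \<circ> Z)"
    by (rule indep_var_compose[OF ind]) auto
  then have ind2: "indep_var borel I borel (\<lambda>\<omega>. (Z \<omega>)\<^sup>2)"
    by (simp add: comp_def I_def)
  have e1: "expectation (\<lambda>\<omega>. Y \<omega> * I \<omega> * Z \<omega>) = 0"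
    using indep_var_lebesgue_integral[OF ind1 iYI iZ] EZ by simp
  have i1: "integrable M (\<lambda>\<omega>. Y \<omega> * I \<omega> * Z \<omega>)"
    using indep_var_integrable[OF ind1 iYI iZ] by simp
  have e2: "expectation (\<lambda>\<omega>. I \<omega> * (Z \<omega>)\<^sup>2) = expectation I * expectation (\<lambda>\<omega>. (Y \<omega>)\<^sup>2)"
    using indep_var_lebesgue_integral[OF ind2 iI iZ2] E2 by simp
  have i2: "integrable M (\<lambda>\<omega>. I \<omega> * (Z \<omega>)\<^sup>2)"
    using indep_var_integrable[OF ind2 iI iZ2] by simp
  have sqle: "a\<^sup>2 \<le> (Y \<omega>)\<^sup>2" if "a \<le> \<bar>Y \<omega>\<bar>" for \<omega>
    using power_mono[OF that a, of 2] by simp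
  have sqge: "(Y \<omega>)\<^sup>2 \<le> a\<^sup>2" if "\<not> a \<le> \<bar>Y \<omega>\<bar>" for \<omega>
    using power_mono[of "\<bar>Y \<omega>\<bar>" a 2] that by simp
  define s where "s = expectation (\<lambda>\<omega>. (Y \<omega>)\<^sup>2 * I \<omega>)"
  define P where "P = expectation I"
  define V where "V = expectation (\<lambda>\<omega>. (Y \<omega>)\<^sup>2)"
  have "(\<lambda>\<omega>. (Y \<omega> - Z \<omega>)\<^sup>2 * indicator {\<omega>. \<bar>Y \<omega>\<bar> \<ge> a} \<omega>)
      = (\<lambda>\<omega>. ((Y \<omega>)\<^sup>2 * I \<omega> - 2 * (Y \<omega> * I \<omega> * Z \<omega>)) + I \<omega> * (Z \<omega>)\<^sup>2)"
    by (auto simp: ind_eq power2_eq_square algebra_simps)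
  then have L: "expectation (\<lambda>\<omega>. (Y \<omega> - Z \<omega>)\<^sup>2 * indicator {\<omega>. \<bar>Y \<omega>\<bar> \<ge> a} \<omega>) = s + P * V"
    using iY2I i1 i2 e1 e2 by (simp add: s_def P_def V_def)
  have R: "expectation (\<lambda>\<omega>. (Y \<omega>)\<^sup>2 * indicator {\<omega>. \<bar>Y \<omega>\<bar> \<ge> a} \<omega>) = s"
    by (simp add: ind_eq s_def)
  have P0: "0 \<le> P" unfolding P_def by (rule integral_nonneg_AE) (auto simp: I_def)
  have P1: "P \<le> 1"
  proof -
    have "P \<le> expectation (\<lambda>_. 1::real)" unfolding P_def
      by (rule integral_mono[OF iI]) (auto simp: I_def)
    then show ?thesis by (simp add: prob_space)
  qed
  have s0: "0 \<le> s" unfolding s_def by (rule integral_nonneg_AE) (auto simp: I_def)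
  have aP: "a\<^sup>2 * P \<le> s"
  proof -
    have "a\<^sup>2 * P = expectation (\<lambda>\<omega>. a\<^sup>2 * I \<omega>)" unfolding P_def by simp
    also have "\<dots> \<le> s" unfolding s_def
    proof (rule integral_mono)
      show "integrable M (\<lambda>\<omega>. a\<^sup>2 * I \<omega>)" using iI by simp
      show "integrable M (\<lambda>\<omega>. (Y \<omega>)\<^sup>2 * I \<omega>)" by (rule iY2I)
      fix \<omega> show "a\<^sup>2 * I \<omega> \<le> (Y \<omega>)\<^sup>2 * I \<omega>"
        using a sqle sqge by (auto simp: I_def)
    qed
    finally show ?thesis .
  qed
  have VB: "V \<le> s + a\<^sup>2 * (1 - P)"
  proof -
    have "V = s + expectation (\<lambda>\<omega>. (Y \<omega>)\<^sup>2 * (1 - I \<omega>))"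
    proof -
      have eqf: "(\<lambda>\<omega>. (Y \<omega>)\<^sup>2) = (\<lambda>\<omega>. (Y \<omega>)\<^sup>2 * I \<omega> + (Y \<omega>)\<^sup>2 * (1 - I \<omega>))"
        by (auto simp: algebra_simps)
      have int3: "integrable M (\<lambda>\<omega>. (Y \<omega>)\<^sup>2 * (1 - I \<omega>))"
        by (rule Bochner_Integration.integrable_bound[OF iY2]) (auto simp: I_def)
      show ?thesis unfolding V_def s_def
        by (subst eqf) (rule Bochner_Integration.integral_add[OF iY2I int3])
    qed
    also have "expectation (\<lambda>\<omega>. (Y \<omega>)\<^sup>2 * (1 - I \<omega>)) \<le> expectation (\<lambda>\<omega>. a\<^sup>2 * (1 - I \<omega>))"
    proof (rule integral_mono)
      show "integrable M (\<lambda>\<omega>. (Y \<omega>)\<^sup>2 * (1 - I \<omega>))"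
        by (rule Bochner_Integration.integrable_bound[OF iY2]) (auto simp: I_def)
      show "integrable M (\<lambda>\<omega>. a\<^sup>2 * (1 - I \<omega>))" using iI by simp
      fix \<omega> show "(Y \<omega>)\<^sup>2 * (1 - I \<omega>) \<le> a\<^sup>2 * (1 - I \<omega>)"
        using a sqle sqge by (auto simp: I_def)
    qed
    also have "expectation (\<lambda>\<omega>. a\<^sup>2 * (1 - I \<omega>)) = a\<^sup>2 * (1 - P)"
      using iI by (simp add: P_def prob_space)
    finally show ?thesis by simp
  qed
  have "P * V \<le> P * (s + a\<^sup>2 * (1 - P))" using VB P0 by (rule mult_left_mono)
  also have "\<dots> = P * s + (a\<^sup>2 * P) * (1 - P)" by (simp add: algebra_simps)
  also have "\<dots> \<le> P * s + s * (1 - P)" using aP P1 by (simp add: mult_right_mono)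
  also have "\<dots> = s" by (simp add: algebra_simps)
  finally have "P * V \<le> s" .
  then show ?thesis using L R by simp
qed


lemma (in prob_space) same_distr:
  fixes X X' :: "'a \<Rightarrow> real" and g :: "real \<Rightarrow> real"
  assumes [measurable]: "X \<in> borel_measurable M" "X' \<in> borel_measurable M" "g \<in> borel_measurable borel"
  and d: "distr M borel X = distr M borel X'"
  shows "integrable M (\<lambda>\<omega>. g (X' \<omega>)) \<longleftrightarrow> integrable M (\<lambda>\<omega>. g (X \<omega>))"
    and "expectation (\<lambda>\<omega>. g (X' \<omega>)) = expectation (\<lambda>\<omega>. g (X \<omega>))"
proof -
  show "integrable M (\<lambda>\<omega>. g (X' \<omega>)) \<longleftrightarrow> integrable M (\<lambda>\<omega>. g (X \<omega>))"
    using integrable_distr_eq[of X M borel g] integrable_distr_eq[of X' M borel g] d by simp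
  show "expectation (\<lambda>\<omega>. g (X' \<omega>)) = expectation (\<lambda>\<omega>. g (X \<omega>))"
    using integral_distr[of X M borel g] integral_distr[of X' M borel g] d by simp
qed

lemma (in prob_space) int_gen:
  fixes X X' :: "'a \<Rightarrow> real"
  assumes [measurable]: "X \<in> borel_measurable M" "X' \<in> borel_measurable M"
  and iX2: "integrable M (\<lambda>\<omega>. (X \<omega>)\<^sup>2)" and iX2': "integrable M (\<lambda>\<omega>. (X' \<omega>)\<^sup>2)"
  and that[measurable]: "Measurable.pred (borel \<Otimes>\<^sub>M borel) (\<lambda>(x,y). P x y)"
  shows "integrable M (\<lambda>\<omega>. (X \<omega> - X' \<omega>)\<^sup>2 * indicator {\<omega>. P (X \<omega>) (X' \<omega>)} \<omega>)"
proof -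
  have iD: "integrable M (\<lambda>\<omega>. 2 * (X \<omega>)\<^sup>2 + 2 * (X' \<omega>)\<^sup>2)" using iX2 iX2' by simp
  have sqb: "(x - y)\<^sup>2 \<le> 2 * x\<^sup>2 + 2 * y\<^sup>2" for x y :: real
    using sum_squares_ge_zero[of "x + y" 0] by (simp add: power2_eq_square algebra_simps)
  have eq: "(\<lambda>\<omega>. (X \<omega> - X' \<omega>)\<^sup>2 * indicator {\<omega>. P (X \<omega>) (X' \<omega>)} \<omega>)
     = (\<lambda>\<omega>. (X \<omega> - X' \<omega>)\<^sup>2 * (if P (X \<omega>) (X' \<omega>) then 1 else 0))"
    by (auto simp: indicator_def)
  have m[measurable]: "Measurable.pred M (\<lambda>\<omega>. P (X \<omega>) (X' \<omega>))"
    using measurable_compose[OF measurable_Pair[of X M borel X' borel] that] by simp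
  have mm: "(\<lambda>\<omega>. (X \<omega> - X' \<omega>)\<^sup>2 * (if P (X \<omega>) (X' \<omega>) then 1 else 0)) \<in> borel_measurable M"
    by measurable
  have pw: "norm ((X \<omega> - X' \<omega>)\<^sup>2 * (if P (X \<omega>) (X' \<omega>) then 1 else (0::real)))
      \<le> norm (2 * (X \<omega>)\<^sup>2 + 2 * (X' \<omega>)\<^sup>2)" for \<omega>
  proof -
    have "0 \<le> (X \<omega> - X' \<omega>)\<^sup>2 * (if P (X \<omega>) (X' \<omega>) then 1 else (0::real))" by simp
    moreover have "(X \<omega> - X' \<omega>)\<^sup>2 * (if P (X \<omega>) (X' \<omega>) then 1 else (0::real)) \<le> (X \<omega> - X' \<omega>)\<^sup>2"
      by simp
    moreover have "(X \<omega> - X' \<omega>)\<^sup>2 \<le> 2 * (X \<omega>)\<^sup>2 + 2 * (X' \<omega>)\<^sup>2" by (rule sqb)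
    ultimately show ?thesis by simp
  qed
  have "integrable M (\<lambda>\<omega>. (X \<omega> - X' \<omega>)\<^sup>2 * (if P (X \<omega>) (X' \<omega>) then 1 else 0))"
    by (rule Bochner_Integration.integrable_bound[OF iD mm]) (rule AE_I2, rule pw)
  then show ?thesis using eq by simp
qed

lemma (in prob_space) core:
  fixes X X' :: "'a \<Rightarrow> real"
  assumes [measurable]: "X \<in> borel_measurable M" "X' \<in> borel_measurable M"
  and ind: "indep_var borel X borel X'" and d: "distr M borel X = distr M borel X'"
  and iX: "integrable M X" and iX2: "integrable M (\<lambda>\<omega>. (X \<omega>)\<^sup>2)" and EX: "expectation X = 0"
  and a: "a \<ge> 0" and b: "b \<ge> 0"
  shows "expectation (\<lambda>\<omega>. (X \<omega> - X' \<omega>)\<^sup>2 * indicator {\<omega>. \<bar>X \<omega> - X' \<omega>\<bar> \<ge> a + b} \<omega>)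
    \<le> 2 * expectation (\<lambda>\<omega>. (X \<omega>)\<^sup>2 * indicator {\<omega>. \<bar>X \<omega>\<bar> \<ge> a} \<omega>)
     + 2 * expectation (\<lambda>\<omega>. (X \<omega>)\<^sup>2 * indicator {\<omega>. \<bar>X \<omega>\<bar> \<ge> b} \<omega>)"
proof -
  have g1: "(\<lambda>x::real. x) \<in> borel_measurable borel" by simp
  have g2: "(\<lambda>x::real. x\<^sup>2) \<in> borel_measurable borel" by measurable
  have g3: "(\<lambda>x::real. x\<^sup>2 * indicator {x. \<bar>x\<bar> \<ge> b} x) \<in> borel_measurable borel"
    by (intro borel_measurable_times g2 borel_measurable_indicator) measurable
  note sd1 = same_distr(1)[OF assms(1,2) _ d] and sd2 = same_distr(2)[OF assms(1,2) _ d]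
  have iX': "integrable M X'" using sd1[OF g1] iX by blast
  have iX2': "integrable M (\<lambda>\<omega>. (X' \<omega>)\<^sup>2)" using sd1[OF g2] iX2 by blast
  have EX': "expectation X' = 0" using sd2[OF g1] EX by simp
  have E2: "expectation (\<lambda>\<omega>. (X' \<omega>)\<^sup>2) = expectation (\<lambda>\<omega>. (X \<omega>)\<^sup>2)"
    using sd2[OF g2] .
  have Eb: "expectation (\<lambda>\<omega>. (X' \<omega>)\<^sup>2 * indicator {\<omega>. \<bar>X' \<omega>\<bar> \<ge> b} \<omega>)
      = expectation (\<lambda>\<omega>. (X \<omega>)\<^sup>2 * indicator {\<omega>. \<bar>X \<omega>\<bar> \<ge> b} \<omega>)"
  proof -
    have h: "\<And>Z. (\<lambda>\<omega>. (Z \<omega>)\<^sup>2 * indicator {x. \<bar>x\<bar> \<ge> b} (Z \<omega>))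
       = (\<lambda>\<omega>. (Z \<omega>)\<^sup>2 * indicator {\<omega>. \<bar>Z \<omega>\<bar> \<ge> b} \<omega> :: real)"
      by (simp add: indicator_def)
    show ?thesis using sd2[OF g3] unfolding h .
  qed
  have B1: "expectation (\<lambda>\<omega>. (X \<omega> - X' \<omega>)\<^sup>2 * indicator {\<omega>. \<bar>X \<omega>\<bar> \<ge> a} \<omega>)
     \<le> 2 * expectation (\<lambda>\<omega>. (X \<omega>)\<^sup>2 * indicator {\<omega>. \<bar>X \<omega>\<bar> \<ge> a} \<omega>)"
    by (rule stepB[OF ind _ _ iX2 iX iX' iX2' EX' E2 a]) auto
  have B2': "expectation (\<lambda>\<omega>. (X' \<omega> - X \<omega>)\<^sup>2 * indicator {\<omega>. \<bar>X' \<omega>\<bar> \<ge> b} \<omega>)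
     \<le> 2 * expectation (\<lambda>\<omega>. (X' \<omega>)\<^sup>2 * indicator {\<omega>. \<bar>X' \<omega>\<bar> \<ge> b} \<omega>)"
    by (rule stepB[OF indep_var_sym[OF ind] _ _ iX2' iX' iX iX2 EX E2[symmetric] b]) auto
  have sw: "(\<lambda>\<omega>. (X' \<omega> - X \<omega>)\<^sup>2 * indicator {\<omega>. \<bar>X' \<omega>\<bar> \<ge> b} \<omega>)
      = (\<lambda>\<omega>. (X \<omega> - X' \<omega>)\<^sup>2 * indicator {\<omega>. \<bar>X' \<omega>\<bar> \<ge> b} \<omega>)"
    by (simp add: power2_commute)
  have B2: "expectation (\<lambda>\<omega>. (X \<omega> - X' \<omega>)\<^sup>2 * indicator {\<omega>. \<bar>X' \<omega>\<bar> \<ge> b} \<omega>)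
     \<le> 2 * expectation (\<lambda>\<omega>. (X \<omega>)\<^sup>2 * indicator {\<omega>. \<bar>X \<omega>\<bar> \<ge> b} \<omega>)"
    using B2' Eb sw by simp
  have iD: "integrable M (\<lambda>\<omega>. 2 * (X \<omega>)\<^sup>2 + 2 * (X' \<omega>)\<^sup>2)" using iX2 iX2' by simp
  have sqb: "(x - y)\<^sup>2 \<le> 2 * x\<^sup>2 + 2 * y\<^sup>2" for x y :: real
    using sum_squares_ge_zero[of "x + y" 0] by (simp add: power2_eq_square algebra_simps)
  have int_gen: "integrable M (\<lambda>\<omega>. (X \<omega> - X' \<omega>)\<^sup>2 * indicator {\<omega>. P (X \<omega>) (X' \<omega>)} \<omega>)"
    if [measurable]: "Measurable.pred (borel \<Otimes>\<^sub>M borel) (\<lambda>(x,y). P x y)" for P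
  proof -
    have eq: "(\<lambda>\<omega>. (X \<omega> - X' \<omega>)\<^sup>2 * indicator {\<omega>. P (X \<omega>) (X' \<omega>)} \<omega>)
       = (\<lambda>\<omega>. (X \<omega> - X' \<omega>)\<^sup>2 * (if P (X \<omega>) (X' \<omega>) then 1 else 0))"
      by (auto simp: indicator_def)
    have m[measurable]: "Measurable.pred M (\<lambda>\<omega>. P (X \<omega>) (X' \<omega>))"
      using measurable_compose[OF measurable_Pair[of X M borel X' borel] that] by simp
    have mm: "(\<lambda>\<omega>. (X \<omega> - X' \<omega>)\<^sup>2 * (if P (X \<omega>) (X' \<omega>) then 1 else 0)) \<in> borel_measurable M"
      by measurable
    have pw: "norm ((X \<omega> - X' \<omega>)\<^sup>2 * (if P (X \<omega>) (X' \<omega>) then 1 else (0::real)))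
        \<le> norm (2 * (X \<omega>)\<^sup>2 + 2 * (X' \<omega>)\<^sup>2)" for \<omega>
    proof -
      have "0 \<le> (X \<omega> - X' \<omega>)\<^sup>2 * (if P (X \<omega>) (X' \<omega>) then 1 else (0::real))" by simp
      moreover have "(X \<omega> - X' \<omega>)\<^sup>2 * (if P (X \<omega>) (X' \<omega>) then 1 else (0::real)) \<le> (X \<omega> - X' \<omega>)\<^sup>2"
        by simp
      moreover have "(X \<omega> - X' \<omega>)\<^sup>2 \<le> 2 * (X \<omega>)\<^sup>2 + 2 * (X' \<omega>)\<^sup>2" by (rule sqb)
      ultimately show ?thesis by simp
    qed
    have "integrable M (\<lambda>\<omega>. (X \<omega> - X' \<omega>)\<^sup>2 * (if P (X \<omega>) (X' \<omega>) then 1 else 0))"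
      by (rule Bochner_Integration.integrable_bound[OF iD mm]) (rule AE_I2, rule pw)
    then show ?thesis using eq by simp
  qed
  have i0: "integrable M (\<lambda>\<omega>. (X \<omega> - X' \<omega>)\<^sup>2 * indicator {\<omega>. \<bar>X \<omega> - X' \<omega>\<bar> \<ge> a + b} \<omega>)"
    by (rule int_gen[of "\<lambda>x y. \<bar>x - y\<bar> \<ge> a + b"]) measurable
  have i1: "integrable M (\<lambda>\<omega>. (X \<omega> - X' \<omega>)\<^sup>2 * indicator {\<omega>. \<bar>X \<omega>\<bar> \<ge> a} \<omega>)"
    by (rule int_gen[of "\<lambda>x y. \<bar>x\<bar> \<ge> a"]) measurable
  have i2: "integrable M (\<lambda>\<omega>. (X \<omega> - X' \<omega>)\<^sup>2 * indicator {\<omega>. \<bar>X' \<omega>\<bar> \<ge> b} \<omega>)"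
    by (rule int_gen[of "\<lambda>x y. \<bar>y\<bar> \<ge> b"]) measurable
  have "expectation (\<lambda>\<omega>. (X \<omega> - X' \<omega>)\<^sup>2 * indicator {\<omega>. \<bar>X \<omega> - X' \<omega>\<bar> \<ge> a + b} \<omega>)
     \<le> expectation (\<lambda>\<omega>. (X \<omega> - X' \<omega>)\<^sup>2 * indicator {\<omega>. \<bar>X \<omega>\<bar> \<ge> a} \<omega>
          + (X \<omega> - X' \<omega>)\<^sup>2 * indicator {\<omega>. \<bar>X' \<omega>\<bar> \<ge> b} \<omega>)"
  proof (rule integral_mono[OF i0 Bochner_Integration.integrable_add[OF i1 i2]])
    fix \<omega>
    have "\<bar>X \<omega> - X' \<omega>\<bar> \<ge> a + b \<Longrightarrow> \<bar>X \<omega>\<bar> \<ge> a \<or> \<bar>X' \<omega>\<bar> \<ge> b" by linarith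
    then show "(X \<omega> - X' \<omega>)\<^sup>2 * indicator {\<omega>. \<bar>X \<omega> - X' \<omega>\<bar> \<ge> a + b} \<omega>
        \<le> (X \<omega> - X' \<omega>)\<^sup>2 * indicator {\<omega>. \<bar>X \<omega>\<bar> \<ge> a} \<omega>
          + (X \<omega> - X' \<omega>)\<^sup>2 * indicator {\<omega>. \<bar>X' \<omega>\<bar> \<ge> b} \<omega>"
      by (auto simp: indicator_def)
  qed
  also have "\<dots> = expectation (\<lambda>\<omega>. (X \<omega> - X' \<omega>)\<^sup>2 * indicator {\<omega>. \<bar>X \<omega>\<bar> \<ge> a} \<omega>)
      + expectation (\<lambda>\<omega>. (X \<omega> - X' \<omega>)\<^sup>2 * indicator {\<omega>. \<bar>X' \<omega>\<bar> \<ge> b} \<omega>)"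
    by (rule Bochner_Integration.integral_add[OF i1 i2])
  finally show ?thesis using B1 B2 by simp
qed



lemma pair_setup:
  assumes N: "prob_space N" and sN: "sets N = sets borel"
  shows "prob_space (N \<Otimes>\<^sub>M N)"
   and "fst \<in> borel_measurable (N \<Otimes>\<^sub>M N)" and "snd \<in> borel_measurable (N \<Otimes>\<^sub>M N)"
   and "distr (N \<Otimes>\<^sub>M N) borel fst = N" and "distr (N \<Otimes>\<^sub>M N) borel snd = N"
   and "prob_space.indep_var (N \<Otimes>\<^sub>M N) borel fst borel snd"
proof -
  interpret N: prob_space N by (rule N)
  interpret P: pair_prob_space N N
    by (simp add: pair_prob_space_def pair_sigma_finite_def N prob_space_imp_sigma_finite)
  show "prob_space (N \<Otimes>\<^sub>M N)" by unfold_locales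
  have mc: "measurable (N \<Otimes>\<^sub>M N) N = measurable (N \<Otimes>\<^sub>M N) borel"
    by (rule measurable_cong_sets[OF refl sN])
  show mf: "fst \<in> borel_measurable (N \<Otimes>\<^sub>M N)" using measurable_fst[of N N] mc by simp
  show ms: "snd \<in> borel_measurable (N \<Otimes>\<^sub>M N)" using measurable_snd[of N N] mc by simp
  have "distr (N \<Otimes>\<^sub>M N) borel fst = distr (N \<Otimes>\<^sub>M N) N fst"
    by (rule distr_cong) (auto simp: sN)
  then show df: "distr (N \<Otimes>\<^sub>M N) borel fst = N" using N.distr_pair_fst[of N] by simp
  have "distr (N \<Otimes>\<^sub>M N) borel snd = distr (N \<Otimes>\<^sub>M N) N snd"
    by (rule distr_cong) (auto simp: sN)
  also have "distr (N \<Otimes>\<^sub>M N) N snd = N"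
  proof (intro measure_eqI)
    fix A assume A: "A \<in> sets (distr (N \<Otimes>\<^sub>M N) N snd)"
    from A have "emeasure (distr (N \<Otimes>\<^sub>M N) N snd) A = emeasure (N \<Otimes>\<^sub>M N) (space N \<times> A)"
      by (auto simp add: emeasure_distr space_pair_measure dest: sets.sets_into_space intro!: arg_cong2[where f=emeasure])
    with A show "emeasure (distr (N \<Otimes>\<^sub>M N) N snd) A = emeasure N A"
      by (simp add: N.emeasure_pair_measure_Times N.emeasure_space_1)
  qed simp
  finally show ds: "distr (N \<Otimes>\<^sub>M N) borel snd = N" .
  have sp: "sets (borel \<Otimes>\<^sub>M borel) = sets (N \<Otimes>\<^sub>M N)"
    using sets_pair_measure_cong[OF sN sN] by simp
  have "distr (N \<Otimes>\<^sub>M N) (borel \<Otimes>\<^sub>M borel) (\<lambda>x. (fst x, snd x)) = N \<Otimes>\<^sub>M N"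
    using distr_id2[OF sp] by simp
  then show "prob_space.indep_var (N \<Otimes>\<^sub>M N) borel fst borel snd"
    using P.indep_var_distribution_eq[of borel fst borel snd] mf ms df ds by simp
qed

lemma pair_transfer:
  fixes N :: "real measure" and g :: "real \<Rightarrow> real"
  assumes N: "prob_space N" and sN: "sets N = sets borel"
  and g[measurable]: "g \<in> borel_measurable (borel :: real measure)"
  shows "integrable (N \<Otimes>\<^sub>M N) (\<lambda>w. g (fst w)) \<longleftrightarrow> integrable N g"
    and "(\<integral>w. g (fst w) \<partial>(N \<Otimes>\<^sub>M N)) = (\<integral>x. g x \<partial>N)"
    and "integrable (N \<Otimes>\<^sub>M N) (\<lambda>w. g (snd w)) \<longleftrightarrow> integrable N g"
proof -
  note ps = pair_setup[OF N sN]
  show "integrable (N \<Otimes>\<^sub>M N) (\<lambda>w. g (fst w)) \<longleftrightarrow> integrable N g"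
    using integrable_distr_eq[OF ps(2) g] ps(4) by simp
  show "(\<integral>w. g (fst w) \<partial>(N \<Otimes>\<^sub>M N)) = (\<integral>x. g x \<partial>N)"
    using integral_distr[OF ps(2) g] ps(4) by simp
  show "integrable (N \<Otimes>\<^sub>M N) (\<lambda>w. g (snd w)) \<longleftrightarrow> integrable N g"
    using integrable_distr_eq[OF ps(3) g] ps(5) by simp
qed

lemma ratio_bound:
  assumes N: "prob_space N" and sN: "sets N = sets borel"
  and i1: "integrable N (\<lambda>x. x)" and i2: "integrable N (\<lambda>x. x\<^sup>2)" and E: "(\<integral>x. x \<partial>N) = 0"
  and z: "z \<ge> 0"
  shows "sigma_s2 N z \<le> 4 * sigma2 N (z / 2)"
proof -
  note ps = pair_setup[OF N sN]
  interpret P: prob_space "N \<Otimes>\<^sub>M N" by (rule ps(1))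
  have g1: "(\<lambda>x::real. x) \<in> borel_measurable borel" by simp
  have g2: "(\<lambda>x::real. x\<^sup>2) \<in> borel_measurable borel" by measurable
  have g3: "(\<lambda>x::real. x\<^sup>2 * indicator {x. \<bar>x\<bar> \<ge> z / 2} x) \<in> borel_measurable borel"
    by (intro borel_measurable_times g2 borel_measurable_indicator) measurable
  have iX: "integrable (N \<Otimes>\<^sub>M N) fst" using pair_transfer(1)[OF N sN g1] i1 by simp
  have iX2: "integrable (N \<Otimes>\<^sub>M N) (\<lambda>w. (fst w)\<^sup>2)" using pair_transfer(1)[OF N sN g2] i2 by simp
  have EX: "P.expectation fst = 0" using pair_transfer(2)[OF N sN g1] E by simp
  have h: "(\<lambda>\<omega>. (fst \<omega>)\<^sup>2 * indicator {x. \<bar>x\<bar> \<ge> z / 2} (fst \<omega>))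
       = (\<lambda>\<omega>. (fst \<omega>)\<^sup>2 * indicator {\<omega>. \<bar>fst \<omega>\<bar> \<ge> z / 2} \<omega> :: real)"
    by (simp add: indicator_def of_bool_def)
  have S: "P.expectation (\<lambda>\<omega>. (fst \<omega>)\<^sup>2 * indicator {\<omega>. \<bar>fst \<omega>\<bar> \<ge> z / 2} \<omega>) = sigma2 N (z / 2)"
    using pair_transfer(2)[OF N sN g3] unfolding h sigma2_def .
  have "z / 2 \<ge> 0" using z by simp
  from P.core[OF ps(2,3,6) _ iX iX2 EX this this] ps(4,5)
  have "P.expectation (\<lambda>\<omega>. (fst \<omega> - snd \<omega>)\<^sup>2 * indicator {\<omega>. \<bar>fst \<omega> - snd \<omega>\<bar> \<ge> z / 2 + z / 2} \<omega>)
      \<le> 2 * sigma2 N (z / 2) + 2 * sigma2 N (z / 2)" unfolding S by simp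
  then show ?thesis unfolding sigma_s2_def by simp
qed

lemma tp_basic:
  fixes z p :: real
  assumes p: "0 < p" "p < 1"
  shows "prob_space (two_point z p)" and "sets (two_point z p) = sets borel"
    and "\<And>g::real \<Rightarrow> real. g \<in> borel_measurable borel \<Longrightarrow> integrable (two_point z p) g"
    and "\<And>g. g \<in> borel_measurable borel \<Longrightarrow>
          (\<integral>x. g x \<partial>two_point z p) = g ((1 - p) * z) * p + g (- p * z) * (1 - p)"
proof -
  define h where "h = (\<lambda>b. if b then (1 - p) * z else - p * z)"
  have hm: "h \<in> measurable (measure_pmf (bernoulli_pmf p)) borel" by simp
  have tp: "two_point z p = distr (measure_pmf (bernoulli_pmf p)) borel h"
    unfolding two_point_def h_def ..
  show "prob_space (two_point z p)" unfolding tp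
    by (rule prob_space.prob_space_distr[OF prob_space_measure_pmf hm])
  show "sets (two_point z p) = sets borel" unfolding tp by simp
  fix g :: "real \<Rightarrow> real" assume g: "g \<in> borel_measurable borel"
  have fin: "finite (set_pmf (bernoulli_pmf p))" by simp
  show "integrable (two_point z p) g" unfolding tp
    using integrable_distr_eq[OF hm g] integrable_measure_pmf_finite[OF fin] by simp
  show "(\<integral>x. g x \<partial>two_point z p) = g ((1 - p) * z) * p + g (- p * z) * (1 - p)"
    unfolding tp using integral_distr[OF hm g] p by (simp add: h_def)
qed

lemma tp_values:
  fixes z p :: real
  assumes z: "z > 0" and p: "1/2 < p" "p < 1"
  shows "sigma2 (two_point z p) (z / 2) = (1 - p) * p\<^sup>2 * z\<^sup>2"
    and "sigma_s2 (two_point z p) z = 2 * p * (1 - p) * z\<^sup>2"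
proof -
  have p0: "0 < p" "p < 1" using p by auto
  note tb = tp_basic[OF p0, where z=z]
  have g: "(\<lambda>x::real. x\<^sup>2 * indicator {x. \<bar>x\<bar> \<ge> c} x) \<in> borel_measurable borel" for c
    by (intro borel_measurable_times borel_measurable_indicator) measurable
  have a1: "\<not> \<bar>(1 - p) * z\<bar> \<ge> z / 2"
  proof -
    have "(1 - p) * z < z / 2" using z p by (simp add: field_simps)
    moreover have "0 \<le> (1 - p) * z" using z p by simp
    ultimately show ?thesis by (simp only: abs_of_nonneg)
  qed
  have a2: "\<bar>- p * z\<bar> \<ge> z / 2"
  proof -
    have "p * z \<ge> z / 2" using z p by (simp add: field_simps)
    moreover have "0 \<le> p * z" using z p by simp
    moreover have "\<bar>- p * z\<bar> = p * z" using z p by simp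
    ultimately show ?thesis by linarith
  qed
  show "sigma2 (two_point z p) (z / 2) = (1 - p) * p\<^sup>2 * z\<^sup>2"
    unfolding sigma2_def using tb(4)[OF g[of "z/2"]] a1 a2
    by (simp add: power_mult_distrib)
  define N where "N = two_point z p"
  have N: "prob_space N" and sN: "sets N = sets borel" using tb(1,2) by (auto simp: N_def)
  have PS: "pair_sigma_finite N N"
    using N by (simp add: pair_sigma_finite_def prob_space_imp_sigma_finite)
  define f where "f = (\<lambda>w::real\<times>real. (fst w - snd w)\<^sup>2 * (if \<bar>fst w - snd w\<bar> \<ge> z then 1 else 0))"
  note ps = pair_setup[OF N sN]
  have i2: "integrable N (\<lambda>x. x\<^sup>2)" unfolding N_def by (rule tb(3)) measurable
  have iX2: "integrable (N \<Otimes>\<^sub>M N) (\<lambda>w. (fst w)\<^sup>2)"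
    using pair_transfer(1)[OF N sN, of "\<lambda>x. x\<^sup>2"] i2 by simp
  have iX2': "integrable (N \<Otimes>\<^sub>M N) (\<lambda>w. (snd w)\<^sup>2)"
    using pair_transfer(3)[OF N sN, of "\<lambda>x. x\<^sup>2"] i2 by simp
  have "integrable (N \<Otimes>\<^sub>M N) (\<lambda>\<omega>. (fst \<omega> - snd \<omega>)\<^sup>2 *
          indicator {\<omega>. (\<lambda>x y. \<bar>x - y\<bar> \<ge> z) (fst \<omega>) (snd \<omega>)} \<omega>)"
    by (rule prob_space.int_gen[OF ps(1) ps(2,3) iX2 iX2']) measurable
  then have fi: "integrable (N \<Otimes>\<^sub>M N) f" unfolding f_def by (simp add: indicator_def of_bool_def)
  have fm: "(\<lambda>y. f (x, y)) \<in> borel_measurable borel" for x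
    unfolding f_def fst_conv snd_conv by measurable
  have inner: "(\<integral>y. f (x, y) \<partial>N) = f (x, (1 - p) * z) * p + f (x, - p * z) * (1 - p)" for x
    unfolding N_def by (rule tb(4)[OF fm])
  have fm2: "(\<lambda>x. f (x, (1 - p) * z) * p + f (x, - p * z) * (1 - p)) \<in> borel_measurable borel"
    unfolding f_def fst_conv snd_conv by measurable
  have "sigma_s2 N z = (\<integral>x. (\<integral>y. f (x, y) \<partial>N) \<partial>N)"
    unfolding sigma_s2_def using pair_sigma_finite.integral_fst'[OF PS fi] by (simp add: f_def indicator_def of_bool_def)
  also have "\<dots> = (\<integral>x. f (x, (1 - p) * z) * p + f (x, - p * z) * (1 - p) \<partial>N)"
    by (simp add: inner)
  also have "\<dots> = 2 * p * (1 - p) * z\<^sup>2"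
  proof -
    have d1: "(1 - p) * z - - p * z = z" by (simp add: algebra_simps)
    have d2: "- p * z - (1 - p) * z = - z" by (simp add: algebra_simps)
    show ?thesis unfolding N_def using tb(4)[OF fm2] z
      by (simp add: f_def d1 d2 indicator_def power2_eq_square algebra_simps)
  qed
  finally show "sigma_s2 (two_point z p) z = 2 * p * (1 - p) * z\<^sup>2" unfolding N_def .
qed



theorem theorem3:
  shows
  "(\<forall>(M :: 'a measure) (X :: 'a \<Rightarrow> real) (X' :: 'a \<Rightarrow> real).
      prob_space M \<and> X \<in> borel_measurable M \<and> X' \<in> borel_measurable M \<and>
      prob_space.indep_var M borel X borel X' \<and> distr M borel X = distr M borel X' \<and>
      integrable M X \<and> integrable M (\<lambda>\<omega>. (X \<omega>)\<^sup>2) \<and> prob_space.expectation M X = 0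
    \<longrightarrow>
      (let s2 = (\<lambda>z. prob_space.expectation M (\<lambda>\<omega>. (X \<omega>)\<^sup>2 * indicator {\<omega>. \<bar>X \<omega>\<bar> \<ge> z} \<omega>));
           ss2 = (\<lambda>z. prob_space.expectation M
                    (\<lambda>\<omega>. (X \<omega> - X' \<omega>)\<^sup>2 * indicator {\<omega>. \<bar>X \<omega> - X' \<omega>\<bar> \<ge> z} \<omega>))
       in (\<forall>z \<ge> 0. \<forall>\<alpha> \<in> {0..1}. ss2 z \<le> 2 * s2 (\<alpha> * z) + 2 * s2 ((1 - \<alpha>) * z))
          \<and> (\<forall>z \<ge> 0. ss2 z \<le> 4 * s2 (z / 2))))
   \<and>
   (\<forall>z :: real. z > 0 \<longrightarrow>
      Sup {sigma_s2 N z / sigma2 N (z / 2) | N.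
             prob_space N \<and> sets N = sets borel \<and> integrable N (\<lambda>x. x) \<and>
             integrable N (\<lambda>x. x\<^sup>2) \<and> (\<integral>x. x \<partial>N) = 0 \<and> sigma2 N (z / 2) > 0} = 4
      \<and> ((\<lambda>p. sigma_s2 (two_point z p) z / sigma2 (two_point z p) (z / 2))
           \<longlongrightarrow> 4) (at_right (1 / 2)))"
proof (rule conjI)
  show "\<forall>(M :: 'a measure) (X :: 'a \<Rightarrow> real) (X' :: 'a \<Rightarrow> real).
      prob_space M \<and> X \<in> borel_measurable M \<and> X' \<in> borel_measurable M \<and>
      prob_space.indep_var M borel X borel X' \<and> distr M borel X = distr M borel X' \<and>
      integrable M X \<and> integrable M (\<lambda>\<omega>. (X \<omega>)\<^sup>2) \<and> prob_space.expectation M X = 0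
    \<longrightarrow>
      (let s2 = (\<lambda>z. prob_space.expectation M (\<lambda>\<omega>. (X \<omega>)\<^sup>2 * indicator {\<omega>. \<bar>X \<omega>\<bar> \<ge> z} \<omega>));
           ss2 = (\<lambda>z. prob_space.expectation M
                    (\<lambda>\<omega>. (X \<omega> - X' \<omega>)\<^sup>2 * indicator {\<omega>. \<bar>X \<omega> - X' \<omega>\<bar> \<ge> z} \<omega>))
       in (\<forall>z \<ge> 0. \<forall>\<alpha> \<in> {0..1}. ss2 z \<le> 2 * s2 (\<alpha> * z) + 2 * s2 ((1 - \<alpha>) * z))
          \<and> (\<forall>z \<ge> 0. ss2 z \<le> 4 * s2 (z / 2)))"
  proof (intro allI impI)
    fix M :: "'a measure" and X X' :: "'a \<Rightarrow> real"
    assume H: "prob_space M \<and> X \<in> borel_measurable M \<and> X' \<in> borel_measurable M \<and>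
      prob_space.indep_var M borel X borel X' \<and> distr M borel X = distr M borel X' \<and>
      integrable M X \<and> integrable M (\<lambda>\<omega>. (X \<omega>)\<^sup>2) \<and> prob_space.expectation M X = 0"
    then have PM: "prob_space M" by simp
    interpret prob_space M by (rule PM)
    have mX: "X \<in> borel_measurable M" and mX': "X' \<in> borel_measurable M"
      and ind: "indep_var borel X borel X'" and d: "distr M borel X = distr M borel X'"
      and iX: "integrable M X" and iX2: "integrable M (\<lambda>\<omega>. (X \<omega>)\<^sup>2)" and EX: "expectation X = 0"
      using H by auto
    note C = core[OF mX mX' ind d iX iX2 EX]
    show "let s2 = (\<lambda>z. expectation (\<lambda>\<omega>. (X \<omega>)\<^sup>2 * indicator {\<omega>. \<bar>X \<omega>\<bar> \<ge> z} \<omega>));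
           ss2 = (\<lambda>z. expectation
                    (\<lambda>\<omega>. (X \<omega> - X' \<omega>)\<^sup>2 * indicator {\<omega>. \<bar>X \<omega> - X' \<omega>\<bar> \<ge> z} \<omega>))
       in (\<forall>z \<ge> 0. \<forall>\<alpha> \<in> {0..1}. ss2 z \<le> 2 * s2 (\<alpha> * z) + 2 * s2 ((1 - \<alpha>) * z))
          \<and> (\<forall>z \<ge> 0. ss2 z \<le> 4 * s2 (z / 2))"
      unfolding Let_def
    proof (intro conjI allI impI ballI)
      fix z \<alpha> :: real assume z: "0 \<le> z" and a: "\<alpha> \<in> {0..1}"
      have a1: "0 \<le> \<alpha> * z" using z a by simp
      have a2: "0 \<le> (1 - \<alpha>) * z" using z a by simp
      have e: "\<alpha> * z + (1 - \<alpha>) * z = z" by (simp add: algebra_simps)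
      show "expectation (\<lambda>\<omega>. (X \<omega> - X' \<omega>)\<^sup>2 * indicator {\<omega>. \<bar>X \<omega> - X' \<omega>\<bar> \<ge> z} \<omega>)
          \<le> 2 * expectation (\<lambda>\<omega>. (X \<omega>)\<^sup>2 * indicator {\<omega>. \<bar>X \<omega>\<bar> \<ge> \<alpha> * z} \<omega>)
           + 2 * expectation (\<lambda>\<omega>. (X \<omega>)\<^sup>2 * indicator {\<omega>. \<bar>X \<omega>\<bar> \<ge> (1 - \<alpha>) * z} \<omega>)"
        using C[OF a1 a2] unfolding e .
    next
      fix z :: real assume z: "0 \<le> z"
      have a1: "0 \<le> z / 2" using z by simp
      have e: "z / 2 + z / 2 = z" by simp
      show "expectation (\<lambda>\<omega>. (X \<omega> - X' \<omega>)\<^sup>2 * indicator {\<omega>. \<bar>X \<omega> - X' \<omega>\<bar> \<ge> z} \<omega>)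
          \<le> 4 * expectation (\<lambda>\<omega>. (X \<omega>)\<^sup>2 * indicator {\<omega>. \<bar>X \<omega>\<bar> \<ge> z / 2} \<omega>)"
        using C[OF a1 a1] unfolding e by simp
    qed
  qed
next
  show "\<forall>z :: real. z > 0 \<longrightarrow>
      Sup {sigma_s2 N z / sigma2 N (z / 2) | N.
             prob_space N \<and> sets N = sets borel \<and> integrable N (\<lambda>x. x) \<and>
             integrable N (\<lambda>x. x\<^sup>2) \<and> (\<integral>x. x \<partial>N) = 0 \<and> sigma2 N (z / 2) > 0} = 4
      \<and> ((\<lambda>p. sigma_s2 (two_point z p) z / sigma2 (two_point z p) (z / 2))
           \<longlongrightarrow> 4) (at_right (1 / 2))"
  proof (intro allI impI)
    fix z :: real assume z: "z > 0"
    define S where "S = {sigma_s2 N z / sigma2 N (z / 2) | N.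
             prob_space N \<and> sets N = sets borel \<and> integrable N (\<lambda>x. x) \<and>
             integrable N (\<lambda>x. x\<^sup>2) \<and> (\<integral>x. x \<partial>N) = 0 \<and> sigma2 N (z / 2) > 0}"
    have ratio: "sigma_s2 (two_point z p) z / sigma2 (two_point z p) (z / 2) = 2 / p"
      if p: "1/2 < p" "p < 1" for p
    proof -
      have q: "0 < 1 - p" "0 < p" using p by auto
      have "sigma_s2 (two_point z p) z / sigma2 (two_point z p) (z / 2)
          = (2 * p * (1 - p) * z\<^sup>2) / ((1 - p) * p\<^sup>2 * z\<^sup>2)"
        using tp_values[OF z p] by simp
      also have "\<dots> = 2 / p" using q z by (simp add: field_simps power2_eq_square)
      finally show ?thesis .
    qed
    have mem: "2 / p \<in> S" if p: "1/2 < p" "p < 1" for p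
    proof -
      have p0: "0 < p" "p < 1" using p by auto
      note tb = tp_basic[OF p0, where z=z]
      have c1: "integrable (two_point z p) (\<lambda>x. x)" by (rule tb(3)) simp
      have c2: "integrable (two_point z p) (\<lambda>x. x\<^sup>2)" by (rule tb(3)) measurable
      have c3: "(\<integral>x. x \<partial>two_point z p) = 0" using tb(4)[of "\<lambda>x. x"] by (simp add: algebra_simps)
      have c4: "sigma2 (two_point z p) (z / 2) > 0" using tp_values(1)[OF z p] p0 z by simp
      show ?thesis unfolding S_def using tb(1,2) c1 c2 c3 c4 ratio[OF p] by (intro CollectI exI[of _ "two_point z p"]) auto
    qed
    have ub: "r \<le> 4" if rS: "r \<in> S" for r
    proof -
      obtain N where r: "r = sigma_s2 N z / sigma2 N (z / 2)" and N: "prob_space N" and sN: "sets N = sets borel"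
        and i1: "integrable N (\<lambda>x. x)" and i2: "integrable N (\<lambda>x. x\<^sup>2)" and E: "(\<integral>x. x \<partial>N) = 0"
        and pos: "sigma2 N (z / 2) > 0"
        using rS unfolding S_def by blast
      have "sigma_s2 N z \<le> 4 * sigma2 N (z / 2)" using ratio_bound[OF N sN i1 i2 E] z by simp
      then show ?thesis unfolding r using pos by (simp add: pos_divide_le_eq)
    qed
    have ne: "S \<noteq> {}" using mem[of "3/5"] by auto
    have bdd: "bdd_above S" using ub by (auto simp: bdd_above_def)
    have le: "Sup S \<le> 4" by (rule cSup_least[OF ne]) (rule ub)
    have ge: "4 \<le> Sup S"
    proof (rule ccontr)
      assume "\<not> 4 \<le> Sup S"
      then have s4: "Sup S < 4" by simp
      have "2 / (3/5) \<le> Sup S" by (rule cSup_upper[OF mem bdd]) auto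
      then have s0: "0 < Sup S" by simp
      define p where "p = 4 / (Sup S + 4)"
      have p1: "1/2 < p" unfolding p_def using s4 s0 by (simp add: field_simps)
      have p2: "p < 1" unfolding p_def using s0 by (simp add: field_simps)
      have "2 / p \<le> Sup S" by (rule cSup_upper[OF mem[OF p1 p2] bdd])
      moreover have "2 / p = (Sup S + 4) / 2" unfolding p_def using s0 by (simp add: field_simps)
      ultimately show False using s4 by simp
    qed
    have "Sup S = 4" using le ge by simp
    moreover have "((\<lambda>p. sigma_s2 (two_point z p) z / sigma2 (two_point z p) (z / 2)) \<longlongrightarrow> 4) (at_right (1 / 2))"
    proof -
      have ev: "eventually (\<lambda>p. sigma_s2 (two_point z p) z / sigma2 (two_point z p) (z / 2) = 2 / p) (at_right (1 / 2 :: real))"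
      proof -
        have "eventually (\<lambda>p. p \<in> {1/2<..<1}) (at_right (1/2::real))"
          by (rule eventually_at_right_real) simp
        then show ?thesis by eventually_elim (auto intro: ratio)
      qed
      have "((\<lambda>p. 2 / p) \<longlongrightarrow> 2 / (1/2)) (at_right (1 / 2 :: real))"
        by (intro tendsto_intros) auto
      then have "((\<lambda>p. 2 / p) \<longlongrightarrow> 4) (at_right (1 / 2 :: real))" by simp
      then show ?thesis using tendsto_cong[OF ev] by simp
    qed
    ultimately show "Sup S = 4 \<and> ((\<lambda>p. sigma_s2 (two_point z p) z / sigma2 (two_point z p) (z / 2)) \<longlongrightarrow> 4) (at_right (1 / 2))"
      by simp
  qed
qed

end
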